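(* Let $Q\in\mathbb{R}^{n\times n}$ be symmetric positive definite, $A\in\mathbb{R}^{m\times n}$, $b\in\mathbb{R}^m$, $c\in\mathbb{R}^n$, and suppose the problem $P(Q,A,b,c)$: $\min_{x\in\mathbb{R}^n}\frac12 x^\intercal Qx+c^\intercal x$ s.t. $Ax\preceq b$ is feasible, with optimal solution $x^\ast$. Let $\mu^\ast$ be an optimal solution of the dual problem $\max_{\mu\succeq 0} g(\mu)$, where $g(\mu)=-\frac12(A^\intercal\mu+c)^\intercal Q^{-1}(A^\intercal\mu+c)-\mu^\intercal b$, and let $t:=\operatorname{sign}(\mu^\ast+\nabla g(\mu^\ast))\in\{+1,-1,0\}^m$ (componentwise), where $\nabla g(\mu)=-AQ^{-1}(A^\intercal\mu+c)-b$. Suppose an adversary (the target node) knows $A$, $x^\ast$ and $t$. Then $b$ cannot be uniquely retrieved by the adversary — i.e., there exist $b'\in\mathbb{R}^m$ with $b'\neq b$, a symmetric positive definite $Q'\in\mathbb{R}^{n\times n}$, $c'\in\mathbb{R}^n$, and an optimal solution $\mu'$ of the dual of $P(Q',A,b',c')$ (dual function $g'$ defined as $g$ with $Q',b',c'$ in place of $Q,b,c$) such that $x^\ast$ is the optimal solution of $P(Q',A,b',c')$ and $\operatorname{sign}(\mu'+\nabla g'(\mu'))=t$ — if and only if $t_i<0$ for some $i\in\{1,\dots,m\}$.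
   Context: Vector inequalities $\preceq,\succeq$ are element-wise. The paper's notion of non-unique retrieval: a private input cannot be uniquely retrieved by an adversary if there are at least two values of it, each consistent (together with some values of the other data unknown to the adversary) with everything the adversary knows; the claim makes this explicit for the knowledge $(A,x^\ast,t)$. *)

theory Defs
  imports "HOL-Analysis.Analysis"
begin

definition sym_pos_def :: "real^'n^'n \<Rightarrow> bool" where
  "sym_pos_def Q \<longleftrightarrow> transpose Q = Q \<and> (\<forall>x. x \<noteq> 0 \<longrightarrow> x \<bullet> (Q *v x) > 0)"

definition qp_obj :: "real^'n^'n \<Rightarrow> real^'n \<Rightarrow> real^'n \<Rightarrow> real" where
  "qp_obj Q c x = (1/2) * (x \<bullet> (Q *v x)) + c \<bullet> x"

definition qp_feasible :: "real^'n^'m \<Rightarrow> real^'m \<Rightarrow> real^'n \<Rightarrow> bool" where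
  "qp_feasible A b x \<longleftrightarrow> (\<forall>i. (A *v x) $ i \<le> b $ i)"

definition qp_primal_opt :: "real^'n^'n \<Rightarrow> real^'n^'m \<Rightarrow> real^'m \<Rightarrow> real^'n \<Rightarrow> real^'n \<Rightarrow> bool" where
  "qp_primal_opt Q A b c x \<longleftrightarrow> qp_feasible A b x \<and>
     (\<forall>y. qp_feasible A b y \<longrightarrow> qp_obj Q c x \<le> qp_obj Q c y)"

definition qp_dual :: "real^'n^'n \<Rightarrow> real^'n^'m \<Rightarrow> real^'m \<Rightarrow> real^'n \<Rightarrow> real^'m \<Rightarrow> real" where
  "qp_dual Q A b c \<mu> =
     - (1/2) * ((transpose A *v \<mu> + c) \<bullet> (matrix_inv Q *v (transpose A *v \<mu> + c))) - \<mu> \<bullet> b"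

definition qp_dual_grad :: "real^'n^'n \<Rightarrow> real^'n^'m \<Rightarrow> real^'m \<Rightarrow> real^'n \<Rightarrow> real^'m \<Rightarrow> real^'m" where
  "qp_dual_grad Q A b c \<mu> = - ((A ** matrix_inv Q) *v (transpose A *v \<mu> + c)) - b"

definition qp_dual_opt :: "real^'n^'n \<Rightarrow> real^'n^'m \<Rightarrow> real^'m \<Rightarrow> real^'n \<Rightarrow> real^'m \<Rightarrow> bool" where
  "qp_dual_opt Q A b c \<mu> \<longleftrightarrow> (\<forall>i. 0 \<le> \<mu> $ i) \<and>
     (\<forall>\<nu>. (\<forall>i. 0 \<le> \<nu> $ i) \<longrightarrow> qp_dual Q A b c \<nu> \<le> qp_dual Q A b c \<mu>)"

definition vsign :: "real^'m \<Rightarrow> real^'m" where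
  "vsign v = (\<chi> i. sgn (v $ i))"

end

theory Submission
  imports Defs
begin

lemma inv_props:
  fixes Q :: "real^'n^'n"
  assumes "sym_pos_def Q"
  shows "Q ** matrix_inv Q = mat 1" "matrix_inv Q ** Q = mat 1"
    "transpose (matrix_inv Q) = matrix_inv Q"
proof -
  have "\<forall>x. Q *v x = 0 \<longrightarrow> x = 0"
  proof (intro allI impI, rule ccontr)
    fix x assume "Q *v x = 0" "x \<noteq> 0"
    with assms show False unfolding sym_pos_def_def by auto
  qed
  then have "invertible Q" using matrix_left_invertible_ker invertible_left_inverse by blast
  then have *: "Q ** matrix_inv Q = mat 1 \<and> matrix_inv Q ** Q = mat 1"
    unfolding invertible_def matrix_inv_def by (rule someI_ex)
  then show "Q ** matrix_inv Q = mat 1" "matrix_inv Q ** Q = mat 1" by auto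
  have tq: "transpose Q = Q" using assms unfolding sym_pos_def_def by auto
  have "transpose (matrix_inv Q) ** Q = mat 1"
    by (metis * tq matrix_transpose_mul transpose_mat)
  then show "transpose (matrix_inv Q) = matrix_inv Q"
    by (metis * matrix_mul_assoc matrix_mul_lid matrix_mul_rid)
qed

lemma inv_id: "matrix_inv (mat 1 :: real^'n^'n) = mat 1"
proof -
  have "(mat 1::real^'n^'n) ** mat 1 = mat 1 \<and> (mat 1::real^'n^'n) ** mat 1 = mat 1" by simp
  then have "(mat 1::real^'n^'n) ** matrix_inv (mat 1::real^'n^'n) = mat 1"
    unfolding matrix_inv_def by (metis (mono_tags, lifting) someI_ex)
  then show ?thesis by simp
qed

lemma sympos_id: "sym_pos_def (mat 1 :: real^'n^'n)"
  unfolding sym_pos_def_def by simp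

lemma symM: fixes M :: "real^'n^'n" assumes "transpose M = M"
  shows "w \<bullet> (M *v u) = u \<bullet> (M *v w)"
  by (metis assms dot_lmul_matrix inner_commute vector_transpose_matrix)

lemma Adot: fixes A :: "real^'n^'m" shows "(A *v v) \<bullet> d = v \<bullet> (transpose A *v d)"
  by (metis dot_lmul_matrix inner_commute transpose_matrix_vector)

lemma expansion:
  fixes Q :: "real^'n^'n" and A :: "real^'n^'m"
  assumes "transpose (matrix_inv Q) = matrix_inv Q"
  shows "qp_dual Q A b c (\<mu> + s *\<^sub>R d) = qp_dual Q A b c \<mu> + s * (qp_dual_grad Q A b c \<mu> \<bullet> d)
     - s^2/2 * ((transpose A *v d) \<bullet> (matrix_inv Q *v (transpose A *v d)))"
proof -
  define M where "M = matrix_inv Q"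
  define w where "w = transpose A *v \<mu> + c"
  define u where "u = transpose A *v d"
  have e1: "transpose A *v (\<mu> + s *\<^sub>R d) + c = w + s *\<^sub>R u"
    unfolding w_def u_def by (simp add: algebra_simps)
  have sy: "w \<bullet> (M *v u) = u \<bullet> (M *v w)" using symM assms M_def by metis
  have g: "qp_dual_grad Q A b c \<mu> \<bullet> d = - (u \<bullet> (M *v w)) - b \<bullet> d"
  proof -
    have "qp_dual_grad Q A b c \<mu> \<bullet> d = - ((A *v (M *v w)) \<bullet> d) - b \<bullet> d"
      unfolding qp_dual_grad_def M_def[symmetric] w_def[symmetric]
      by (simp add: inner_diff_left matrix_vector_mul_assoc[symmetric])
    also have "(A *v (M *v w)) \<bullet> d = u \<bullet> (M *v w)"
      unfolding u_def by (subst Adot) (simp only: inner_commute)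
    finally show ?thesis .
  qed
  show ?thesis
    unfolding qp_dual_def M_def[symmetric] e1 w_def[symmetric] g u_def[symmetric]
    using sy
    by (simp add: algebra_simps inner_add_left inner_add_right power2_eq_square inner_commute)
qed

lemma dual_foc:
  fixes Q :: "real^'n^'n" and A :: "real^'n^'m"
  assumes sym: "transpose (matrix_inv Q) = matrix_inv Q"
    and opt: "qp_dual_opt Q A b c \<mu>"
  shows "qp_dual_grad Q A b c \<mu> $ i \<le> 0"
    and "\<mu> $ i > 0 \<Longrightarrow> qp_dual_grad Q A b c \<mu> $ i \<ge> 0"
proof -
  define gr where "gr = qp_dual_grad Q A b c \<mu> $ i"
  define K where "K = (transpose A *v axis i 1) \<bullet> (matrix_inv Q *v (transpose A *v axis i 1))"
  have exp: "qp_dual Q A b c (\<mu> + s *\<^sub>R axis i 1) = qp_dual Q A b c \<mu> + s * gr - s^2/2 * K" for s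
    using expansion[OF sym, of A b c \<mu> s "axis i 1"] unfolding gr_def K_def
    by (simp add: inner_axis)
  have mu0: "\<And>j. 0 \<le> \<mu> $ j" and mx: "\<And>\<nu>. (\<forall>j. 0 \<le> \<nu> $ j) \<Longrightarrow> qp_dual Q A b c \<nu> \<le> qp_dual Q A b c \<mu>"
    using opt unfolding qp_dual_opt_def by auto
  have key: "s * gr - s^2/2 * K \<le> 0" if "\<forall>j. 0 \<le> (\<mu> + s *\<^sub>R axis i 1) $ j" for s
    using mx[OF that] exp[of s] by linarith
  show "gr \<le> 0" unfolding gr_def[symmetric]
  proof (rule ccontr)
    assume "\<not> gr \<le> 0"
    hence gp: "gr > 0" by simp
    define s where "s = gr / (\<bar>K\<bar> + 1)"
    have sp: "s > 0" using gp unfolding s_def by simp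
    have "s * (\<bar>K\<bar> + 1) = gr" unfolding s_def by simp
    hence h: "s * \<bar>K\<bar> < gr" using sp by (simp add: algebra_simps)
    have "\<forall>j. 0 \<le> (\<mu> + s *\<^sub>R axis i 1) $ j"
      using mu0 sp by (auto simp: axis_def)
    from key[OF this] have "s * gr - s^2/2 * K \<le> 0" .
    moreover have "s^2 * K \<le> s^2 * \<bar>K\<bar>"
      by (rule mult_left_mono) auto
    moreover have "s^2 * \<bar>K\<bar> = s * (s * \<bar>K\<bar>)" by (simp add: power2_eq_square)
    moreover have "s * (s * \<bar>K\<bar>) < s * gr" using h sp by simp
    moreover have "s * gr > 0" using sp gp by simp
    ultimately show False by linarith
  qed
  assume mp: "\<mu> $ i > 0"
  show "gr \<ge> 0" unfolding gr_def[symmetric]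
  proof (rule ccontr)
    assume "\<not> gr \<ge> 0"
    hence gn: "gr < 0" by simp
    define r where "r = min (\<mu> $ i) (- gr / (\<bar>K\<bar> + 1))"
    have rp: "r > 0" using gn mp divide_pos_pos[of "-gr" "\<bar>K\<bar>+1"] unfolding r_def by simp
    have "r \<le> - gr / (\<bar>K\<bar> + 1)" unfolding r_def by simp
    hence "r * (\<bar>K\<bar> + 1) \<le> - gr"
      using pos_le_divide_eq[of "\<bar>K\<bar> + 1" r "- gr"] by simp
    hence h: "r * \<bar>K\<bar> < - gr" using rp by (simp add: algebra_simps)
    have "\<forall>j. 0 \<le> (\<mu> + (-r) *\<^sub>R axis i 1) $ j"
      using mu0 rp by (auto simp: axis_def r_def)
    from key[OF this] have "(-r) * gr - (-r)^2/2 * K \<le> 0" .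
    moreover have "(-r)^2 * K \<le> (-r)^2 * \<bar>K\<bar>"
      by (rule mult_left_mono) auto
    moreover have "(-r)^2 * \<bar>K\<bar> = r * (r * \<bar>K\<bar>)" by (simp add: power2_eq_square)
    moreover have "r * (r * \<bar>K\<bar>) < r * (-gr)" using mult_strict_left_mono[OF h rp] by simp
    moreover have "r * (-gr) > 0" using rp gn by (simp add: mult_pos_neg)
    moreover have "(-r) * gr = r * (-gr)" by simp
    ultimately show False by linarith
  qed
qed

lemma mv_neg: "(A::real^'n^'m) *v (- v) = - (A *v v)"
  by (metis diff_0 matrix_vector_mult_0_right matrix_vector_mult_diff_distrib)

lemma nonpos_inner: fixes u v :: "real^'m"
  assumes "\<And>j. u $ j \<le> 0" "\<And>j. 0 \<le> v $ j" shows "u \<bullet> v \<le> 0"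
  unfolding inner_vec_def inner_real_def by (rule sum_nonpos) (simp add: assms mult_nonpos_nonneg)

lemma kkt:
  fixes Q :: "real^'n^'n" and A :: "real^'n^'m"
  assumes sp: "sym_pos_def Q" and po: "qp_primal_opt Q A b c x" and dopt: "qp_dual_opt Q A b c \<mu>"
  shows "qp_dual_grad Q A b c \<mu> = A *v x - b"
proof -
  define M where "M = matrix_inv Q"
  define w where "w = transpose A *v \<mu> + c"
  define xh where "xh = - (M *v w)"
  define gr where "gr = qp_dual_grad Q A b c \<mu>"
  note ip = inv_props[OF sp]
  have tq: "transpose Q = Q" using sp unfolding sym_pos_def_def by auto
  have gradeq: "gr = A *v xh - b"
    unfolding gr_def qp_dual_grad_def xh_def M_def[symmetric] w_def[symmetric]
    by (simp add: matrix_vector_mul_assoc[symmetric] mv_neg)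
  have Qxh: "Q *v xh = - w"
    unfolding xh_def M_def using ip
    by (simp add: matrix_vector_mul_assoc mv_neg)
  have foc1: "\<And>j. gr $ j \<le> 0" and foc2: "\<And>j. \<mu> $ j > 0 \<Longrightarrow> gr $ j \<ge> 0"
    using dual_foc[OF ip(3) dopt] unfolding gr_def by auto
  have mu0: "\<And>j. 0 \<le> \<mu> $ j" using dopt unfolding qp_dual_opt_def by auto
  have comp: "gr \<bullet> \<mu> = 0"
    unfolding inner_vec_def inner_real_def
  proof (rule sum.neutral, rule ballI)
    fix j
    show "gr $ j * \<mu> $ j = 0"
      using foc1[of j] foc2[of j] mu0[of j] by (cases "\<mu> $ j > 0") auto
  qed
  have feas: "qp_feasible A b xh"
    unfolding qp_feasible_def using foc1 gradeq by auto
  have diff: "qp_obj Q c y - qp_obj Q c xh \<ge> 1/2 * ((y - xh) \<bullet> (Q *v (y - xh)))"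
    if fy: "qp_feasible A b y" for y
  proof -
    define d where "d = y - xh"
    have y: "y = xh + d" unfolding d_def by simp
    have sy: "xh \<bullet> (Q *v d) = d \<bullet> (Q *v xh)" using symM[OF tq] by metis
    have o: "qp_obj Q c y = qp_obj Q c xh + (d \<bullet> (Q *v xh) + c \<bullet> d) + 1/2 * (d \<bullet> (Q *v d))"
      unfolding qp_obj_def y using sy
      by (simp add: algebra_simps inner_add_left inner_add_right)
    have "d \<bullet> (Q *v xh) + c \<bullet> d = - (d \<bullet> (transpose A *v \<mu>))"
      unfolding Qxh w_def by (simp add: inner_diff_right inner_minus_right inner_commute)
    also have "d \<bullet> (transpose A *v \<mu>) = (A *v d) \<bullet> \<mu>"
      using Adot[of A d \<mu>] by (simp only: inner_commute)
    also have "A *v d = (A *v y - b) - gr"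
      unfolding gradeq d_def by (simp add: matrix_vector_mult_diff_distrib)
    finally have "d \<bullet> (Q *v xh) + c \<bullet> d = - ((A *v y - b) \<bullet> \<mu>) + gr \<bullet> \<mu>"
      by (simp add: inner_diff_left)
    moreover have "(A *v y - b) \<bullet> \<mu> \<le> 0"
      using fy mu0 unfolding qp_feasible_def by (intro nonpos_inner) auto
    ultimately show ?thesis using o comp unfolding d_def by linarith
  qed
  have "x = xh"
  proof (rule ccontr)
    assume "x \<noteq> xh"
    hence "(x - xh) \<bullet> (Q *v (x - xh)) > 0" using sp unfolding sym_pos_def_def by auto
    moreover have "qp_obj Q c x - qp_obj Q c xh \<ge> 1/2 * ((x - xh) \<bullet> (Q *v (x - xh)))"
      using diff po unfolding qp_primal_opt_def by auto
    moreover have "qp_obj Q c x \<le> qp_obj Q c xh" using po feas unfolding qp_primal_opt_def by auto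
    ultimately show False by linarith
  qed
  then show ?thesis using gradeq gr_def by simp
qed

lemma primal_suff:
  fixes Q :: "real^'n^'n" and A :: "real^'n^'m"
  assumes tq: "transpose Q = Q" and psd: "\<And>z. 0 \<le> z \<bullet> (Q *v z)"
    and st: "Q *v xh + c = - (transpose A *v \<mu>)"
    and mu0: "\<And>j. 0 \<le> \<mu> $ j" and feas: "qp_feasible A b xh"
    and comp: "(A *v xh - b) \<bullet> \<mu> = 0"
  shows "qp_primal_opt Q A b c xh"
  unfolding qp_primal_opt_def
proof (intro conjI allI impI feas)
  fix y assume fy: "qp_feasible A b y"
  define d where "d = y - xh"
  have y: "y = xh + d" unfolding d_def by simp
  have sy: "xh \<bullet> (Q *v d) = d \<bullet> (Q *v xh)" using symM[OF tq] by metis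
  have o: "qp_obj Q c y = qp_obj Q c xh + (d \<bullet> (Q *v xh) + c \<bullet> d) + 1/2 * (d \<bullet> (Q *v d))"
    unfolding qp_obj_def y using sy
    by (simp add: algebra_simps inner_add_left inner_add_right)
  have "d \<bullet> (Q *v xh) + c \<bullet> d = d \<bullet> (Q *v xh + c)"
    by (simp add: inner_add_right inner_commute)
  also have "\<dots> = - (d \<bullet> (transpose A *v \<mu>))"
    unfolding st by (simp add: inner_minus_right)
  also have "d \<bullet> (transpose A *v \<mu>) = (A *v d) \<bullet> \<mu>"
    using Adot[of A d \<mu>] by (simp only: inner_commute)
  also have "A *v d = (A *v y - b) - (A *v xh - b)"
    unfolding d_def by (simp add: matrix_vector_mult_diff_distrib)
  finally have "d \<bullet> (Q *v xh) + c \<bullet> d = - ((A *v y - b) \<bullet> \<mu>) + (A *v xh - b) \<bullet> \<mu>"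
    by (simp add: inner_diff_left)
  moreover have "(A *v y - b) \<bullet> \<mu> \<le> 0"
    using fy mu0 unfolding qp_feasible_def by (intro nonpos_inner) auto
  moreover have "0 \<le> d \<bullet> (Q *v d)" by (rule psd)
  ultimately show "qp_obj Q c xh \<le> qp_obj Q c y" using o comp by linarith
qed

lemma zero_grad:
  fixes Q :: "real^'n^'n" and A :: "real^'n^'m"
  assumes sp: "sym_pos_def Q" and po: "qp_primal_opt Q A b c x" and dopt: "qp_dual_opt Q A b c \<mu>"
    and sg: "sgn ((\<mu> + qp_dual_grad Q A b c \<mu>) $ i) \<ge> 0"
  shows "(A *v x) $ i = b $ i"
proof -
  have g: "qp_dual_grad Q A b c \<mu> = A *v x - b" by (rule kkt[OF sp po dopt])
  note ip = inv_props[OF sp]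
  have f1: "qp_dual_grad Q A b c \<mu> $ i \<le> 0" and f2: "\<mu> $ i > 0 \<Longrightarrow> qp_dual_grad Q A b c \<mu> $ i \<ge> 0"
    using dual_foc[OF ip(3) dopt] by auto
  have mu0: "0 \<le> \<mu> $ i" using dopt unfolding qp_dual_opt_def by auto
  have "0 \<le> \<mu> $ i + qp_dual_grad Q A b c \<mu> $ i" using sg by (simp add: sgn_if split: if_splits)
  then have "qp_dual_grad Q A b c \<mu> $ i = 0" using f1 f2 mu0 by (cases "\<mu> $ i > 0") auto
  then show ?thesis using g by simp
qed

theorem proposition5:
  fixes Q :: "real^'n^'n" and A :: "real^'n^'m" and b :: "real^'m" and c :: "real^'n"
    and xs :: "real^'n" and \<mu>s :: "real^'m" and t :: "real^'m"
  assumes "sym_pos_def Q"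
    and "\<exists>x. qp_feasible A b x"
    and "qp_primal_opt Q A b c xs"
    and "qp_dual_opt Q A b c \<mu>s"
    and "t = vsign (\<mu>s + qp_dual_grad Q A b c \<mu>s)"
  shows "(\<exists>b' Q' c' \<mu>'. b' \<noteq> b \<and> sym_pos_def Q' \<and> qp_dual_opt Q' A b' c' \<mu>'
            \<and> qp_primal_opt Q' A b' c' xs
            \<and> vsign (\<mu>' + qp_dual_grad Q' A b' c' \<mu>') = t)
         \<longleftrightarrow> (\<exists>i. t $ i < 0)"
proof
  assume "\<exists>b' Q' c' \<mu>'. b' \<noteq> b \<and> sym_pos_def Q' \<and> qp_dual_opt Q' A b' c' \<mu>'
            \<and> qp_primal_opt Q' A b' c' xs
            \<and> vsign (\<mu>' + qp_dual_grad Q' A b' c' \<mu>') = t"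
  then obtain b' Q' c' \<mu>' where ne: "b' \<noteq> b" and sp': "sym_pos_def Q'"
    and do': "qp_dual_opt Q' A b' c' \<mu>'" and po': "qp_primal_opt Q' A b' c' xs"
    and ts: "vsign (\<mu>' + qp_dual_grad Q' A b' c' \<mu>') = t" by blast
  show "\<exists>i. t $ i < 0"
  proof (rule ccontr)
    assume "\<not> (\<exists>i. t $ i < 0)"
    then have tn: "\<And>i. t $ i \<ge> 0" by (meson not_le)
    have "b' $ i = b $ i" for i
    proof -
      have "(A *v xs) $ i = b $ i"
        using zero_grad[OF assms(1) assms(3) assms(4), of i] tn[of i] assms(5)
        by (simp add: vsign_def)
      moreover have "(A *v xs) $ i = b' $ i"
        using zero_grad[OF sp' po' do', of i] tn[of i] ts[symmetric]
        by (simp add: vsign_def)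
      ultimately show ?thesis by simp
    qed
    then have "b' = b" by (simp add: vec_eq_iff)
    with ne show False by simp
  qed
next
  assume "\<exists>i. t $ i < 0"
  then obtain j where tj: "t $ j < 0" by blast
  define ex :: "real^'m" where "ex = (\<chi> i. if t $ i < 0 then (if i = j then \<bar>b $ j - (A *v xs) $ j\<bar> + 1 else 1) else 0)"
  define \<mu>' :: "real^'m" where "\<mu>' = (\<chi> i. if t $ i > 0 then 1 else 0)"
  define b' where "b' = A *v xs + ex"
  define c' where "c' = - (xs + transpose A *v \<mu>')"
  define Q' :: "real^'n^'n" where "Q' = mat 1"
  have tv: "t $ i = sgn ((\<mu>s + qp_dual_grad Q A b c \<mu>s) $ i)" for i
    using assms(5) by (simp add: vsign_def)
  have ex0: "ex $ i \<ge> 0" for i unfolding ex_def by simp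
  have ne: "b' \<noteq> b"
  proof
    assume "b' = b"
    then have "b' $ j = b $ j" by simp
    moreover have "b' $ j = (A *v xs) $ j + \<bar>b $ j - (A *v xs) $ j\<bar> + 1"
      unfolding b'_def ex_def using tj by simp
    ultimately show False by linarith
  qed
  have gr': "qp_dual_grad Q' A b' c' \<mu>' = - ex"
    unfolding qp_dual_grad_def Q'_def inv_id c'_def b'_def
    by (simp add: mv_neg)
  have mu0: "\<And>i. 0 \<le> \<mu>' $ i" unfolding \<mu>'_def by simp
  have comp: "ex \<bullet> \<mu>' = 0"
    unfolding inner_vec_def inner_real_def
    by (rule sum.neutral) (auto simp: ex_def \<mu>'_def)
  have dopt: "qp_dual_opt Q' A b' c' \<mu>'"
    unfolding qp_dual_opt_def
  proof (intro conjI allI impI mu0)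
    fix \<nu> :: "real^'m" assume nn: "\<forall>i. 0 \<le> \<nu> $ i"
    have e: "qp_dual Q' A b' c' (\<mu>' + 1 *\<^sub>R (\<nu> - \<mu>')) = qp_dual Q' A b' c' \<mu>'
       + 1 * (qp_dual_grad Q' A b' c' \<mu>' \<bullet> (\<nu> - \<mu>'))
       - 1^2/2 * ((transpose A *v (\<nu> - \<mu>')) \<bullet> (matrix_inv Q' *v (transpose A *v (\<nu> - \<mu>'))))"
      by (rule expansion) (simp add: Q'_def inv_id)
    have "(transpose A *v (\<nu> - \<mu>')) \<bullet> (matrix_inv Q' *v (transpose A *v (\<nu> - \<mu>'))) \<ge> 0"
      by (simp add: Q'_def inv_id del: transpose_matrix_vector)
    moreover have "qp_dual_grad Q' A b' c' \<mu>' \<bullet> (\<nu> - \<mu>') = - (ex \<bullet> \<nu>)"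
      unfolding gr' using comp by (simp add: inner_diff_right inner_commute)
    moreover have "ex \<bullet> \<nu> \<ge> 0"
      unfolding inner_vec_def inner_real_def using ex0 nn by (intro sum_nonneg) simp
    ultimately show "qp_dual Q' A b' c' \<nu> \<le> qp_dual Q' A b' c' \<mu>'"
      using e by simp
  qed
  have popt: "qp_primal_opt Q' A b' c' xs"
  proof (rule primal_suff[where \<mu> = \<mu>'])
    show "transpose Q' = Q'" unfolding Q'_def by simp
    show "0 \<le> z \<bullet> (Q' *v z)" for z unfolding Q'_def by simp
    show "Q' *v xs + c' = - (transpose A *v \<mu>')" unfolding Q'_def c'_def by simp
    show "0 \<le> \<mu>' $ j" for j by (rule mu0)
    show "qp_feasible A b' xs" unfolding qp_feasible_def b'_def using ex0 by simp
    show "(A *v xs - b') \<bullet> \<mu>' = 0" unfolding b'_def using comp by simp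
  qed
  have "vsign (\<mu>' + qp_dual_grad Q' A b' c' \<mu>') = t"
    unfolding gr' vsign_def
  proof (subst vec_eq_iff, intro allI)
    fix i
    show "(\<chi> i. sgn ((\<mu>' + - ex) $ i)) $ i = t $ i"
      using tv[of i] by (auto simp: \<mu>'_def ex_def sgn_if split: if_splits)
  qed
  then show "\<exists>b' Q' c' \<mu>'. b' \<noteq> b \<and> sym_pos_def Q' \<and> qp_dual_opt Q' A b' c' \<mu>'
            \<and> qp_primal_opt Q' A b' c' xs
            \<and> vsign (\<mu>' + qp_dual_grad Q' A b' c' \<mu>') = t"
    using ne dopt popt sympos_id unfolding Q'_def by blast
qed

end
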